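(* Let $n\ge1$, let $\lambda=(\lambda_1\ge\cdots\ge\lambda_n\ge0)$ be a partition (padded with zeros to length $n$), and let $\boldsymbol\beta=(\beta_1,\dots,\beta_{n-1})$ be parameters. Then, as an identity of rational functions in $q$ (equivalently, for every complex $q$ with $q^m\ne1$ for $1\le m\le n-1$), $$G_\lambda(1,q,q^2,\dots,q^{n-1}\mid\boldsymbol\beta)=\sum_{k_1=0}^{0}\sum_{k_2=0}^{1}\cdots\sum_{k_n=0}^{n-1} e^{(0)}_{k_1}e^{(1)}_{k_2}\cdots e^{(n-1)}_{k_n}\prod_{1\le i<j\le n}\frac{q^{\lambda_j+n-j+k_j}-q^{\lambda_i+n-i+k_i}}{q^{n-j}-q^{n-i}},$$ where $e^{(j-1)}_{k}=e_k(\beta_1,\dots,\beta_{j-1})$ is the $k$-th elementary symmetric polynomial in $\beta_1,\dots,\beta_{j-1}$ (with $e^{(j-1)}_0=1$). In particular, for a single parameter $\beta$, $$G_\lambda(1,q,\dots,q^{n-1}\mid\beta)=\sum_{k_1=0}^{0}\sum_{k_2=0}^{1}\cdots\sum_{k_n=0}^{n-1}\binom{0}{k_1}\binom{1}{k_2}\cdots\binom{n-1}{k_n}\beta^{k_1+\cdots+k_n}\prod_{1\le i<j\le n}\frac{q^{\lambda_j+n-j+k_j}-q^{\lambda_i+n-i+k_i}}{q^{n-j}-q^{n-i}}.$$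
   Context: The refined Grothendieck polynomial in $x=(x_1,\dots,x_n)$ with parameters $\boldsymbol\beta=(\beta_1,\dots,\beta_{n-1})$ is defined by $$G_\lambda(x\mid\boldsymbol\beta)=\frac{\det\Big(x_i^{\lambda_j+n-j}(1+\beta_1x_i)(1+\beta_2x_i)\cdots(1+\beta_{j-1}x_i)\Big)_{1\le i,j\le n}}{\prod_{1\le i<j\le n}(x_i-x_j)}$$ (for $j=1$ the product of factors $(1+\beta_\cdot x_i)$ is empty). The single-parameter Grothendieck polynomial $G_\lambda(x\mid\beta)$ is $G_\lambda(x\mid\beta,\beta,\dots,\beta)$; it is known (Ikeda–Naruse) that this equals $\sum_{T\in\mathrm{SVT}(\lambda,n)}\beta^{|T|-|\lambda|}x^{\omega(T)}$, where $\mathrm{SVT}(\lambda,n)$ is the set of set-valued tableaux of shape $\lambda$ with entries in $[n]=\{1,\dots,n\}$ (each box $(i,j)$ of the Young diagram gets a nonempty $T_{i,j}\subseteq[n]$ with $\max T_{i,j}\le\min T_{i,j+1}$, $\max T_{i,j}<\min T_{i+1,j}$), $|T|=\sum|T_{i,j}|$, $|\lambda|=\sum\lambda_i$, and $x^{\omega(T)}=\prod_m x_m^{\#\{\text{boxes whose set contains } m\}}$. *)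

theory Defs
  imports Complex_Main "HOL-Combinatorics.Permutations" "HOL-Library.FuncSet"
begin

text \<open>Indices are 1-based: x 1 .. x n, lam 1 .. lam n, beta 1 .. beta (n-1).
  The n x n determinant is written out by the Leibniz formula over permutations of {1..n}.\<close>

definition gmat :: "nat \<Rightarrow> (nat \<Rightarrow> nat) \<Rightarrow> (nat \<Rightarrow> complex) \<Rightarrow> (nat \<Rightarrow> complex)
    \<Rightarrow> nat \<Rightarrow> nat \<Rightarrow> complex" where
  "gmat n lam beta x i j =
     x i ^ (lam j + n - j) * (\<Prod>m\<in>{1..<j}. (1 + beta m * x i))"

definition refined_groth :: "nat \<Rightarrow> (nat \<Rightarrow> nat) \<Rightarrow> (nat \<Rightarrow> complex) \<Rightarrow> (nat \<Rightarrow> complex) \<Rightarrow> complex" where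
  "refined_groth n lam beta x =
     (\<Sum>p | p permutes {1..n}. of_int (sign p) * (\<Prod>i\<in>{1..n}. gmat n lam beta x i (p i)))
     / (\<Prod>i\<in>{1..n}. \<Prod>j\<in>{i<..n}. (x i - x j))"

definition esym :: "nat \<Rightarrow> nat \<Rightarrow> (nat \<Rightarrow> complex) \<Rightarrow> complex" where
  "esym r k beta = (\<Sum>S | S \<subseteq> {1..r} \<and> card S = k. \<Prod>m\<in>S. beta m)"

definition is_partition :: "nat \<Rightarrow> (nat \<Rightarrow> nat) \<Rightarrow> bool" where
  "is_partition n lam \<longleftrightarrow> (\<forall>i j. 1 \<le> i \<longrightarrow> i \<le> j \<longrightarrow> j \<le> n \<longrightarrow> lam j \<le> lam i)"

definition qprod :: "nat \<Rightarrow> (nat \<Rightarrow> nat) \<Rightarrow> complex \<Rightarrow> (nat \<Rightarrow> nat) \<Rightarrow> complex" where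
  "qprod n lam q k = (\<Prod>i\<in>{1..n}. \<Prod>j\<in>{i<..n}.
      (q ^ (lam j + n - j + k j) - q ^ (lam i + n - i + k i)) / (q ^ (n - j) - q ^ (n - i)))"

end

theory Submission
  imports Defs "Jordan_Normal_Form.Determinant"
begin


lemma det_scale_cols:
  fixes M :: "nat \<Rightarrow> nat \<Rightarrow> 'a::comm_ring_1"
  shows "det (mat n n (\<lambda>(i,j). c j * M i j)) = (\<Prod>j<n. c j) * det (mat n n (\<lambda>(i,j). M i j))"
proof -
  have "det (mat n n (\<lambda>(i,j). c j * M i j)) =
     (\<Sum>p\<in>{p. p permutes {0..<n}}. (\<Prod>j<n. c j) * (signof p * (\<Prod>i = 0..<n. M i (p i))))"
  proof (subst det_def'[of _ n], simp, rule sum.cong[OF refl])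
    fix p assume "p \<in> {p. p permutes {0..<n}}"
    hence p: "p permutes {0..<n}" by simp
    have "(\<Prod>i = 0..<n. mat n n (\<lambda>(i,j). c j * M i j) $$ (i, p i)) = (\<Prod>i = 0..<n. c (p i) * M i (p i))"
      by (rule prod.cong, simp, subst index_mat, insert permutes_in_image[OF p], auto)
    also have "\<dots> = (\<Prod>i = 0..<n. c (p i)) * (\<Prod>i = 0..<n. M i (p i))" by (simp add: prod.distrib)
    also have "(\<Prod>i = 0..<n. c (p i)) = (\<Prod>j<n. c j)"
      using prod.permute[OF p, of c] by (simp add: atLeast0LessThan comp_def)
    finally show "signof p * (\<Prod>i = 0..<n. mat n n (\<lambda>(i,j). c j * M i j) $$ (i, p i)) =
       (\<Prod>j<n. c j) * (signof p * (\<Prod>i = 0..<n. M i (p i)))" by simp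
  qed
  also have "\<dots> = (\<Prod>j<n. c j) * (\<Sum>p\<in>{p. p permutes {0..<n}}. signof p * (\<Prod>i = 0..<n. M i (p i)))"
    by (simp add: sum_distrib_left)
  also have "(\<Sum>p\<in>{p. p permutes {0..<n}}. signof p * (\<Prod>i = 0..<n. M i (p i))) = det (mat n n (\<lambda>(i,j). M i j))"
  proof (subst det_def'[of _ n], simp, rule sum.cong[OF refl])
    fix p assume "p \<in> {p. p permutes {0..<n}}"
    hence p: "p permutes {0..<n}" by simp
    show "signof p * (\<Prod>i = 0..<n. M i (p i)) = signof p * (\<Prod>i = 0..<n. mat n n (\<lambda>(i,j). M i j) $$ (i, p i))"
      by (rule arg_cong[where f="\<lambda>x. _ * x"], rule prod.cong, simp, subst index_mat, insert permutes_in_image[OF p], auto)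
  qed
  finally show ?thesis .
qed

lemma vdm_step_sum:
  fixes y0 t :: "'a::comm_ring_1"
  assumes i: "i < Suc n"
  shows "(\<Sum>k\<in>{0..<Suc n}. (if k = i then 1 else if Suc k = i then - y0 else 0) * t ^ k)
     = (if i = 0 then 1 else (t - y0) * t ^ (i - 1))"
proof -
  have "(\<Sum>k\<in>{0..<Suc n}. (if k = i then 1 else if Suc k = i then - y0 else 0) * t ^ k)
      = (\<Sum>k\<in>{0..<Suc n}. (if k = i then t ^ k else 0) + (if Suc k = i then - y0 * t ^ k else 0))"
    by (rule sum.cong, auto)
  also have "\<dots> = t ^ i + (\<Sum>k\<in>{0..<Suc n}. (if Suc k = i then - y0 * t ^ k else 0))"
    using i by (simp add: sum.distrib)
  also have "(\<Sum>k\<in>{0..<Suc n}. (if Suc k = i then - y0 * t ^ k else 0)) = (if i = 0 then 0 else - y0 * t ^ (i - 1))"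
  proof (cases i)
    case 0 then show ?thesis by simp
  next
    case (Suc i')
    have "(\<Sum>k\<in>{0..<Suc n}. (if Suc k = i then - y0 * t ^ k else 0)) = (\<Sum>k\<in>{0..<Suc n}. (if k = i' then - y0 * t ^ k else 0))"
      using Suc by (intro sum.cong) auto
    also have "\<dots> = - y0 * t ^ i'" using Suc i by simp
    finally show ?thesis using Suc by simp
  qed
  finally show ?thesis
    by (cases i) (auto simp: algebra_simps)
qed

lemma vandermonde:
  fixes y :: "nat \<Rightarrow> 'a::comm_ring_1"
  shows "det (mat n n (\<lambda>(i,j). y j ^ i)) = (\<Prod>i<n. \<Prod>j\<in>{Suc i..<n}. (y j - y i))"
proof (induction n arbitrary: y)
  case 0
  then show ?case by (simp add: det_dim_zero)
next
  case (Suc n)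
  define A where "A = (mat (Suc n) (Suc n) (\<lambda>(i,j). y j ^ i) :: 'a mat)"
  define E where "E = (mat (Suc n) (Suc n) (\<lambda>(i,k). if k = i then 1 else if Suc k = i then - y 0 else 0) :: 'a mat)"
  define B where "B = (mat (Suc n) (Suc n) (\<lambda>(i,j). if i = 0 then 1 else (y j - y 0) * y j ^ (i - 1)) :: 'a mat)"
  have Ac: "A \<in> carrier_mat (Suc n) (Suc n)" and Ec: "E \<in> carrier_mat (Suc n) (Suc n)"
    and Bc: "B \<in> carrier_mat (Suc n) (Suc n)" unfolding A_def E_def B_def by auto
  have detE: "det E = 1"
  proof -
    have "det E = prod_list (diag_mat E)"
      by (rule det_lower_triangular[OF _ Ec], auto simp: E_def)
    also have "diag_mat E = map (\<lambda>_. 1) [0..<Suc n]"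
      unfolding diag_mat_def E_def by auto
    also have "prod_list (map (\<lambda>_. 1::'a) [0..<Suc n]) = 1"
      by (induct n) auto
    finally show ?thesis .
  qed
  have BEA: "B = E * A"
  proof (rule eq_matI)
    fix i j assume i: "i < dim_row (E * A)" and j: "j < dim_col (E * A)"
    hence i': "i < Suc n" and j': "j < Suc n" using Ec Ac by auto
    have "(E * A) $$ (i, j) = (\<Sum>k\<in>{0..<Suc n}. (if k = i then 1 else if Suc k = i then - y 0 else 0) * y j ^ k)"
      using i' j' Ec Ac unfolding E_def A_def
      by (auto simp: scalar_prod_def intro!: sum.cong)
    also have "\<dots> = (if i = 0 then 1 else (y j - y 0) * y j ^ (i - 1))"
      by (rule vdm_step_sum[OF i'])
    also have "\<dots> = B $$ (i,j)"
      using i' j' unfolding B_def by simp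
    finally show "B $$ (i, j) = (E * A) $$ (i, j)" by simp
  qed (use Ec Ac Bc in auto)
  have "det A = det B" using BEA det_mult[OF Ec Ac] detE by simp
  also have "det B = (\<Sum>i<Suc n. B $$ (i,0) * cofactor B i 0)"
    by (rule laplace_expansion_column[OF Bc], simp)
  also have "\<dots> = B $$ (0,0) * cofactor B 0 0"
    by (subst sum.lessThan_Suc_shift, auto simp: B_def)
  also have "\<dots> = det (mat_delete B 0 0)" by (simp add: B_def cofactor_def)
  also have "mat_delete B 0 0 = mat n n (\<lambda>(i,j). (y (Suc j) - y 0) * (y \<circ> Suc) j ^ i)"
    by (rule eq_matI, auto simp: mat_delete_def B_def)
  also have "det \<dots> = (\<Prod>j<n. (y (Suc j) - y 0)) * det (mat n n (\<lambda>(i,j). (y \<circ> Suc) j ^ i))"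
    by (rule det_scale_cols)
  also have "\<dots> = (\<Prod>j<n. (y (Suc j) - y 0)) * (\<Prod>i<n. \<Prod>j\<in>{Suc i..<n}. ((y \<circ> Suc) j - (y \<circ> Suc) i))"
    by (simp only: Suc.IH)
  also have "\<dots> = (\<Prod>i<Suc n. \<Prod>j\<in>{Suc i..<Suc n}. (y j - y i))"
  proof -
    have "(\<Prod>i<Suc n. \<Prod>j\<in>{Suc i..<Suc n}. (y j - y i)) =
       (\<Prod>j\<in>{Suc 0..<Suc n}. (y j - y 0)) * (\<Prod>i<n. \<Prod>j\<in>{Suc (Suc i)..<Suc n}. (y j - y (Suc i)))"
      by (subst prod.lessThan_Suc_shift, simp)
    also have "(\<Prod>j\<in>{Suc 0..<Suc n}. (y j - y 0)) = (\<Prod>j<n. (y (Suc j) - y 0))"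
      by (subst prod.shift_bounds_Suc_ivl, simp add: atLeast0LessThan)
    also have "(\<Prod>i<n. \<Prod>j\<in>{Suc (Suc i)..<Suc n}. (y j - y (Suc i))) = (\<Prod>i<n. \<Prod>j\<in>{Suc i..<n}. ((y \<circ> Suc) j - (y \<circ> Suc) i))"
      by (subst prod.shift_bounds_Suc_ivl, simp)
    finally show ?thesis by simp
  qed
  finally show ?case unfolding A_def .
qed

lemma leib_shift:
  fixes A :: "nat \<Rightarrow> nat \<Rightarrow> 'a::comm_ring_1"
  shows "(\<Sum>p | p permutes {1..n}. of_int (sign p) * (\<Prod>i\<in>{1..n}. A i (p i)))
       = det (mat n n (\<lambda>(i,j). A (Suc i) (Suc j)))"
proof -
  define A' where "A' = (mat (Suc n) (Suc n) (\<lambda>(i,j). if i = 0 \<and> j = 0 then 1 else if i = 0 \<or> j = 0 then 0 else A i j) :: 'a mat)"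
  have Ac: "A' \<in> carrier_mat (Suc n) (Suc n)" unfolding A'_def by auto
  have "det A' = (\<Sum>i<Suc n. A' $$ (i,0) * cofactor A' i 0)"
    by (rule laplace_expansion_column[OF Ac], simp)
  also have "\<dots> = A' $$ (0,0) * cofactor A' 0 0"
    by (subst sum.lessThan_Suc_shift, auto simp: A'_def)
  also have "\<dots> = det (mat_delete A' 0 0)" by (simp add: A'_def cofactor_def)
  also have "mat_delete A' 0 0 = mat n n (\<lambda>(i,j). A (Suc i) (Suc j))"
    by (rule eq_matI, auto simp: mat_delete_def A'_def)
  finally have 1: "det A' = det (mat n n (\<lambda>(i,j). A (Suc i) (Suc j)))" .
  have "det A' = (\<Sum>p | p permutes {0..<Suc n}. of_int (sign p) * (\<Prod>i = 0..<Suc n. A' $$ (i, p i)))"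
    by (rule det_def'[OF Ac])
  also have "\<dots> = (\<Sum>p | p permutes {1..n}. of_int (sign p) * (\<Prod>i\<in>{1..n}. A i (p i)))"
  proof (rule sum.mono_neutral_cong_right)
    show "finite {p. p permutes {0..<Suc n}}" by (rule finite_permutations) simp
    show "{p. p permutes {1..n}} \<subseteq> {p. p permutes {0..<Suc n}}"
      by (auto intro: permutes_subset)
    show "\<forall>p\<in>{p. p permutes {0..<Suc n}} - {p. p permutes {1..n}}.
        of_int (sign p) * (\<Prod>i = 0..<Suc n. A' $$ (i, p i)) = 0"
    proof
      fix p assume "p \<in> {p. p permutes {0..<Suc n}} - {p. p permutes {1..n}}"
      hence p: "p permutes {0..<Suc n}" and np: "\<not> p permutes {1..n}" by auto
      have "p 0 \<noteq> 0"
      proof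
        assume "p 0 = 0"
        hence "p permutes {1..n}"
          by (intro permutes_superset[OF p]) (auto simp: not_less_eq_eq)
        with np show False by simp
      qed
      moreover have "p 0 < Suc n" using permutes_in_image[OF p, of 0] by simp
      ultimately have "A' $$ (0, p 0) = 0" unfolding A'_def by simp
      hence "(\<Prod>i = 0..<Suc n. A' $$ (i, p i)) = 0"
        by (intro prod_zero) auto
      thus "of_int (sign p) * (\<Prod>i = 0..<Suc n. A' $$ (i, p i)) = 0" by simp
    qed
    fix p assume "p \<in> {p. p permutes {1..n}}"
    hence p: "p permutes {1..n}" by simp
    have p0: "p 0 = 0" using p by (simp add: permutes_def)
    have pi: "i \<in> {1..n} \<Longrightarrow> p i \<in> {1..n}" for i using permutes_in_image[OF p] by simp
    have "{0..<Suc n} = insert 0 {1..n}" by auto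
    hence "(\<Prod>i = 0..<Suc n. A' $$ (i, p i)) = A' $$ (0, p 0) * (\<Prod>i\<in>{1..n}. A' $$ (i, p i))"
      by simp
    also have "\<dots> = (\<Prod>i\<in>{1..n}. A' $$ (i, p i))" using p0 by (simp add: A'_def)
    also have "\<dots> = (\<Prod>i\<in>{1..n}. A i (p i))"
    proof (rule prod.cong[OF refl])
      fix i assume i: "i \<in> {1..n}"
      from pi[OF i] i show "A' $$ (i, p i) = A i (p i)" unfolding A'_def
        by (subst index_mat) auto
    qed
    finally show "of_int (sign p) * (\<Prod>i = 0..<Suc n. A' $$ (i, p i)) =
        of_int (sign p) * (\<Prod>i\<in>{1..n}. A i (p i))" by simp
  qed
  finally show ?thesis using 1 by simp
qed

lemma leib_multilin:
  fixes c :: "nat \<Rightarrow> nat \<Rightarrow> 'a::comm_ring_1" and f :: "nat \<Rightarrow> nat \<Rightarrow> nat \<Rightarrow> 'a"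
  assumes S: "finite S" and K: "\<And>j. j \<in> S \<Longrightarrow> finite (K j)"
  shows "(\<Sum>p | p permutes S. of_int (sign p) * (\<Prod>i\<in>S. \<Sum>k\<in>K (p i). c (p i) k * f i (p i) k))
   = (\<Sum>\<kappa>\<in>PiE S K. (\<Prod>j\<in>S. c j (\<kappa> j)) *
        (\<Sum>p | p permutes S. of_int (sign p) * (\<Prod>i\<in>S. f i (p i) (\<kappa> (p i)))))"
proof -
  have step: "(\<Prod>i\<in>S. \<Sum>k\<in>K (p i). c (p i) k * f i (p i) k) =
     (\<Sum>\<kappa>\<in>PiE S K. (\<Prod>j\<in>S. c j (\<kappa> j)) * (\<Prod>i\<in>S. f i (p i) (\<kappa> (p i))))"
    if p: "p permutes S" for p
  proof -
    define g where "g j = (\<Sum>k\<in>K j. c j k * f (inv_into UNIV p j) j k)" for j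
    have "(\<Prod>i\<in>S. \<Sum>k\<in>K (p i). c (p i) k * f i (p i) k) = (\<Prod>i\<in>S. (g \<circ> p) i)"
      unfolding g_def by (simp add: permutes_inverses(2)[OF p])
    also have "\<dots> = (\<Prod>j\<in>S. g j)" using prod.permute[OF p, of g] by simp
    also have "\<dots> = (\<Sum>\<kappa>\<in>PiE S K. \<Prod>j\<in>S. c j (\<kappa> j) * f (inv_into UNIV p j) j (\<kappa> j))"
      unfolding g_def by (rule prod_sum_PiE[OF S K])
    also have "\<dots> = (\<Sum>\<kappa>\<in>PiE S K. (\<Prod>j\<in>S. c j (\<kappa> j)) * (\<Prod>i\<in>S. f i (p i) (\<kappa> (p i))))"
    proof (rule sum.cong[OF refl])
      fix \<kappa>
      have "(\<Prod>j\<in>S. f (inv_into UNIV p j) j (\<kappa> j)) = (\<Prod>i\<in>S. ((\<lambda>j. f (inv_into UNIV p j) j (\<kappa> j)) \<circ> p) i)"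
        using prod.permute[OF p, of "\<lambda>j. f (inv_into UNIV p j) j (\<kappa> j)"] by simp
      also have "\<dots> = (\<Prod>i\<in>S. f i (p i) (\<kappa> (p i)))"
        by (simp add: permutes_inverses(2)[OF p])
      finally show "(\<Prod>j\<in>S. c j (\<kappa> j) * f (inv_into UNIV p j) j (\<kappa> j)) =
          (\<Prod>j\<in>S. c j (\<kappa> j)) * (\<Prod>i\<in>S. f i (p i) (\<kappa> (p i)))"
        by (simp add: prod.distrib)
    qed
    finally show ?thesis .
  qed
  have "(\<Sum>p | p permutes S. of_int (sign p) * (\<Prod>i\<in>S. \<Sum>k\<in>K (p i). c (p i) k * f i (p i) k))
     = (\<Sum>p | p permutes S. \<Sum>\<kappa>\<in>PiE S K. (\<Prod>j\<in>S. c j (\<kappa> j)) * (of_int (sign p) * (\<Prod>i\<in>S. f i (p i) (\<kappa> (p i)))))"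
    by (rule sum.cong[OF refl]) (simp add: step sum_distrib_left mult_ac)
  also have "\<dots> = (\<Sum>\<kappa>\<in>PiE S K. \<Sum>p | p permutes S. (\<Prod>j\<in>S. c j (\<kappa> j)) * (of_int (sign p) * (\<Prod>i\<in>S. f i (p i) (\<kappa> (p i)))))"
    by (rule sum.swap)
  finally show ?thesis by (simp add: sum_distrib_left)
qed



lemma poly_expand:
  fixes beta :: "nat \<Rightarrow> complex" and x :: complex
  assumes j: "1 \<le> j"
  shows "(\<Prod>m\<in>{1..<j}. (1 + beta m * x)) = (\<Sum>k\<in>{..<j}. esym (j - 1) k beta * x ^ k)"
proof -
  let ?S = "{1..<j}"
  have "(\<Prod>m\<in>?S. (1 + beta m * x)) = (\<Prod>m\<in>?S. (beta m * x + 1))" by (simp add: add.commute)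
  also have "\<dots> = (\<Sum>X\<in>Pow ?S. (\<Prod>m\<in>X. beta m * x) * (\<Prod>m\<in>?S - X. 1))"
    by (rule prod_add) simp
  also have "\<dots> = (\<Sum>X\<in>Pow ?S. (\<Prod>m\<in>X. beta m) * x ^ card X)"
    by (simp add: prod.distrib)
  also have "\<dots> = (\<Sum>k\<in>{..<j}. \<Sum>X\<in>{X. X \<in> Pow ?S \<and> card X = k}. (\<Prod>m\<in>X. beta m) * x ^ card X)"
  proof (rule sum.group[symmetric])
    show "card ` Pow ?S \<subseteq> {..<j}"
    proof
      fix k assume "k \<in> card ` Pow ?S"
      then obtain X where X: "X \<subseteq> ?S" "k = card X" by auto
      hence "card X \<le> card ?S" by (intro card_mono) auto
      thus "k \<in> {..<j}" using X j by auto
    qed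
  qed auto
  also have "\<dots> = (\<Sum>k\<in>{..<j}. esym (j - 1) k beta * x ^ k)"
  proof (rule sum.cong[OF refl])
    fix k
    have e0: "?S = {1..j-1}" using j by auto
    have e: "{X. X \<in> Pow ?S \<and> card X = k} = {S. S \<subseteq> {1..j-1} \<and> card S = k}"
      unfolding e0 by auto
    have "(\<Sum>X\<in>{X. X \<in> Pow ?S \<and> card X = k}. (\<Prod>m\<in>X. beta m) * x ^ card X)
       = (\<Sum>X\<in>{X. X \<in> Pow ?S \<and> card X = k}. (\<Prod>m\<in>X. beta m) * x ^ k)"
      by (rule sum.cong) auto
    also have "\<dots> = esym (j - 1) k beta * x ^ k"
      unfolding esym_def e by (simp add: sum_distrib_right)
    finally show "(\<Sum>X\<in>{X. X \<in> Pow ?S \<and> card X = k}. (\<Prod>m\<in>X. beta m) * x ^ card X)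
       = esym (j - 1) k beta * x ^ k" .
  qed
  finally show ?thesis .
qed

lemma esym_const: "esym r k (\<lambda>_. b) = of_nat (r choose k) * b ^ k"
proof -
  have "esym r k (\<lambda>_. b) = (\<Sum>S | S \<subseteq> {1..r} \<and> card S = k. b ^ k)"
    unfolding esym_def by (rule sum.cong) auto
  also have "\<dots> = of_nat (card {S. S \<subseteq> {1..r} \<and> card S = k}) * b ^ k" by simp
  also have "card {S. S \<subseteq> {1..r} \<and> card S = k} = r choose k"
    using n_subsets[of "{1..r}" k] by simp
  finally show ?thesis .
qed

lemma tri_shift:
  fixes F :: "nat \<Rightarrow> nat \<Rightarrow> 'a::comm_monoid_mult"
  shows "(\<Prod>i<n. \<Prod>j\<in>{Suc i..<n}. F (Suc i) (Suc j)) = (\<Prod>i\<in>{1..n}. \<Prod>j\<in>{i<..n}. F i j)"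
proof -
  have a: "{1..n} = Suc ` {..<n}" by (simp add: image_Suc_lessThan)
  have b: "{Suc i<..n} = Suc ` {Suc i..<n}" for i
    by (simp add: image_Suc_atLeastLessThan) fastforce
  have "(\<Prod>i\<in>{1..n}. \<Prod>j\<in>{i<..n}. F i j) = (\<Prod>i<n. \<Prod>j\<in>{Suc i<..n}. F (Suc i) j)"
    unfolding a by (subst prod.reindex) auto
  also have "\<dots> = (\<Prod>i<n. \<Prod>j\<in>{Suc i..<n}. F (Suc i) (Suc j))"
    by (rule prod.cong[OF refl], unfold b, subst prod.reindex) auto
  finally show ?thesis by simp
qed

lemma tri_reflect:
  fixes F :: "nat \<Rightarrow> nat \<Rightarrow> 'a::comm_monoid_mult"
  shows "(\<Prod>i\<in>{1..n}. \<Prod>j\<in>{i<..n}. F (Suc n - j) (Suc n - i)) = (\<Prod>i\<in>{1..n}. \<Prod>j\<in>{i<..n}. F i j)"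
proof -
  let ?P = "Sigma {1..n} (\<lambda>i. {i<..n})"
  let ?h = "\<lambda>(i::nat,j::nat). (Suc n - j, Suc n - i)"
  have hP: "?h x \<in> ?P" if "x \<in> ?P" for x using that by (cases x) auto
  have hh: "?h (?h x) = x" if "x \<in> ?P" for x using that by (cases x) auto
  have "(\<Prod>i\<in>{1..n}. \<Prod>j\<in>{i<..n}. F (Suc n - j) (Suc n - i)) = (\<Prod>(i,j)\<in>?P. F (Suc n - j) (Suc n - i))"
    by (rule prod.Sigma) auto
  also have "\<dots> = (\<Prod>(i,j)\<in>?P. F i j)"
    by (rule prod.reindex_bij_witness[where i="?h" and j="?h"]) (use hP hh in \<open>auto simp: case_prod_beta\<close>)
  also have "\<dots> = (\<Prod>i\<in>{1..n}. \<Prod>j\<in>{i<..n}. F i j)"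
    by (rule prod.Sigma[symmetric]) auto
  finally show ?thesis .
qed

lemma part1:
  fixes n :: nat and lam :: "nat \<Rightarrow> nat" and beta :: "nat \<Rightarrow> complex" and q :: complex
  shows "refined_groth n lam beta (\<lambda>i. q ^ (i - 1)) =
           (\<Sum>k\<in>(\<Pi>\<^sub>E j\<in>{1..n}. {..<j}). (\<Prod>j\<in>{1..n}. esym (j - 1) (k j) beta) * qprod n lam q k)"
proof -
  define a where "a \<kappa> j = lam j + n - j + \<kappa> j" for \<kappa> :: "nat \<Rightarrow> nat" and j
  define N where "N \<kappa> = (\<Prod>i\<in>{1..n}. \<Prod>j\<in>{i<..n}. (q ^ (a \<kappa> j) - q ^ (a \<kappa> i)))" for \<kappa>
  define D where "D = (\<Prod>i\<in>{1..n}. \<Prod>j\<in>{i<..n}. (q ^ (i - 1) - (q ^ (j - 1) :: complex)))"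
  define Dq where "Dq = (\<Prod>i\<in>{1..n}. \<Prod>j\<in>{i<..n}. (q ^ (n - j) - (q ^ (n - i) :: complex)))"
  define c where "c \<kappa> = (\<Prod>j\<in>{1..n}. esym (j - 1) (\<kappa> j) beta)" for \<kappa>
  have gm: "gmat n lam beta (\<lambda>i. q ^ (i - 1)) i j = (\<Sum>k\<in>{..<j}. esym (j-1) k beta * (q ^ (i - 1)) ^ (lam j + n - j + k))"
    if "j \<in> {1..n}" for i j
  proof -
    have j1: "1 \<le> j" using that by simp
    show ?thesis
      unfolding gmat_def poly_expand[OF j1] sum_distrib_left
      by (rule sum.cong[OF refl]) (simp only: power_add mult.commute mult.left_commute)
  qed
  have inner: "(\<Sum>p | p permutes {1..n}. of_int (sign p) * (\<Prod>i\<in>{1..n}. (q ^ (i - 1)) ^ (lam (p i) + n - p i + \<kappa> (p i))))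
     = N \<kappa>" for \<kappa>
  proof -
    have "(\<Sum>p | p permutes {1..n}. of_int (sign p) * (\<Prod>i\<in>{1..n}. (q ^ (i - 1)) ^ (lam (p i) + n - p i + \<kappa> (p i))))
       = (\<Sum>p | p permutes {1..n}. of_int (sign p) * (\<Prod>i\<in>{1..n}. (\<lambda>i j. (q ^ a \<kappa> j) ^ (i - 1)) i (p i)))"
      unfolding a_def by (simp add: power_mult[symmetric] mult.commute)
    also have "\<dots> = det (mat n n (\<lambda>(i,j). (\<lambda>i j. (q ^ a \<kappa> j) ^ (i - 1)) (Suc i) (Suc j)))"
      by (rule leib_shift)
    also have "\<dots> = det (mat n n (\<lambda>(i,j). (\<lambda>j. q ^ a \<kappa> (Suc j)) j ^ i))"
      by simp
    also have "\<dots> = (\<Prod>i<n. \<Prod>j\<in>{Suc i..<n}. (q ^ a \<kappa> (Suc j) - q ^ a \<kappa> (Suc i)))"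
      by (rule vandermonde)
    also have "\<dots> = N \<kappa>" unfolding N_def
      by (rule tri_shift[where F="\<lambda>i j. q ^ a \<kappa> j - q ^ a \<kappa> i"])
    finally show ?thesis .
  qed
  have DD: "D = Dq"
    unfolding D_def Dq_def using tri_reflect[where F="\<lambda>i j. q ^ (i - 1) - q ^ (j - 1)" and n=n, symmetric]
    by simp
  have qp: "qprod n lam q \<kappa> = N \<kappa> / Dq" for \<kappa>
    unfolding qprod_def N_def Dq_def a_def by (simp add: prod_dividef)
  have "refined_groth n lam beta (\<lambda>i. q ^ (i - 1)) =
      (\<Sum>p | p permutes {1..n}. of_int (sign p) * (\<Prod>i\<in>{1..n}. \<Sum>k\<in>{..<p i}. esym (p i - 1) k beta * (q ^ (i - 1)) ^ (lam (p i) + n - p i + k))) / D"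
    unfolding refined_groth_def D_def
  proof (rule arg_cong[where f="\<lambda>t. t / _"], rule sum.cong[OF refl], rule arg_cong[where f="\<lambda>t. _ * t"], rule prod.cong[OF refl])
    fix p i assume p: "p \<in> {p. p permutes {1..n}}" and i: "i \<in> {1..n}"
    have "p i \<in> {1..n}" using p i permutes_in_image[of p "{1..n}" i] by simp
    then show "gmat n lam beta (\<lambda>i. q ^ (i - 1)) i (p i) =
       (\<Sum>k\<in>{..<p i}. esym (p i - 1) k beta * (q ^ (i - 1)) ^ (lam (p i) + n - p i + k))"
      by (rule gm)
  qed
  also have "(\<Sum>p | p permutes {1..n}. of_int (sign p) * (\<Prod>i\<in>{1..n}. \<Sum>k\<in>{..<p i}. esym (p i - 1) k beta * (q ^ (i - 1)) ^ (lam (p i) + n - p i + k)))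
     = (\<Sum>\<kappa>\<in>PiE {1..n} (\<lambda>j. {..<j}). (\<Prod>j\<in>{1..n}. esym (j - 1) (\<kappa> j) beta) *
        (\<Sum>p | p permutes {1..n}. of_int (sign p) * (\<Prod>i\<in>{1..n}. (q ^ (i - 1)) ^ (lam (p i) + n - p i + \<kappa> (p i)))))"
    using leib_multilin[where S="{1..n}" and K="\<lambda>j. {..<j}" and c="\<lambda>j k. esym (j - 1) k beta"
        and f="\<lambda>i j k. (q ^ (i - 1)) ^ (lam j + n - j + k)"] by simp
  also have "\<dots> = (\<Sum>\<kappa>\<in>PiE {1..n} (\<lambda>j. {..<j}). c \<kappa> * N \<kappa>)"
    unfolding c_def inner ..
  finally show ?thesis
    by (simp add: qp DD sum_divide_distrib c_def)
qed

theorem theorem3p5: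
  fixes n :: nat and lam :: "nat \<Rightarrow> nat" and beta :: "nat \<Rightarrow> complex"
    and q b :: complex
  assumes "n \<ge> 1" and "is_partition n lam"
    and "\<forall>m. 1 \<le> m \<and> m \<le> n - 1 \<longrightarrow> q ^ m \<noteq> 1"
  shows "refined_groth n lam beta (\<lambda>i. q ^ (i - 1)) =
           (\<Sum>k\<in>(\<Pi>\<^sub>E j\<in>{1..n}. {..<j}).
              (\<Prod>j\<in>{1..n}. esym (j - 1) (k j) beta) * qprod n lam q k)
     \<and> refined_groth n lam (\<lambda>_. b) (\<lambda>i. q ^ (i - 1)) =
           (\<Sum>k\<in>(\<Pi>\<^sub>E j\<in>{1..n}. {..<j}).
              (\<Prod>j\<in>{1..n}. of_nat ((j - 1) choose (k j))) * b ^ (\<Sum>j\<in>{1..n}. k j)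
              * qprod n lam q k)"
proof
  show "refined_groth n lam beta (\<lambda>i. q ^ (i - 1)) =
           (\<Sum>k\<in>(\<Pi>\<^sub>E j\<in>{1..n}. {..<j}).
              (\<Prod>j\<in>{1..n}. esym (j - 1) (k j) beta) * qprod n lam q k)" by (rule part1)
  have hk: "(\<Prod>j\<in>{1..n}. esym (j - 1) (k j) (\<lambda>_. b)) = (\<Prod>j\<in>{1..n}. of_nat ((j - 1) choose (k j))) * b ^ (\<Sum>j\<in>{1..n}. k j)"
    for k :: "nat \<Rightarrow> nat"
    by (simp add: esym_const prod.distrib power_sum)
  show "refined_groth n lam (\<lambda>_. b) (\<lambda>i. q ^ (i - 1)) =
           (\<Sum>k\<in>(\<Pi>\<^sub>E j\<in>{1..n}. {..<j}).
              (\<Prod>j\<in>{1..n}. of_nat ((j - 1) choose (k j))) * b ^ (\<Sum>j\<in>{1..n}. k j)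
              * qprod n lam q k)"
    by (simp only: part1 hk)
qed

end
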